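(* Fix $\rho>0$, integers $M\ge N\ge1$ and $c_0,\dots,c_{N-1}>0$, and let $C_m$ ($1\le m\le N$) be as defined below. Then for every $1\le m\le N$ and every $A=\mathbf{u}\mathbf{u}^*\in\mathbb{P}^1_N(\overline{D}(0,\rho))$, every principal $m\times m$ submatrix of $$L_m:=C_m\bigl(c_{N-m}\mathbf{1}_{N\times N}+c_{N-m+1}A+\cdots+c_{N-1}A^{\circ(m-1)}\bigr)-A^{\circ(m+M-N)}$$ is positive semidefinite. In particular (case $m=N$) the polynomial $c_0+\cdots+c_{N-1}z^{N-1}-\mathcal{C}(\mathbf{c};z^M;N,\rho)^{-1}z^M$ preserves positivity entrywise on $\mathbb{P}^1_N(\overline{D}(0,\rho))$.
   Context: $\mathbb{P}^1_N(\overline{D}(0,\rho))$ is the set of $N\times N$ positive semidefinite matrices of rank at most one with entries in the closed disc of radius $\rho$; $A^{\circ n}$ is the entrywise power, $A^{\circ0}=\mathbf{1}_{N\times N}$ the all-ones matrix. $C_m:=\sum_{j=0}^{m-1}\binom{M-N+m}{j}^2\binom{M-N+m-j-1}{m-j-1}^2\rho^{m+M-N-j}/c_{N-m+j}$, and $\mathcal{C}(\mathbf{c};z^M;N,\rho):=C_N=\sum_{j=0}^{N-1}\binom{M}{j}^2\binom{M-j-1}{N-j-1}^2\rho^{M-j}/c_j$. *)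

theory Defs
  imports Complex_Main
begin

text \<open>Matrices are represented as functions nat => nat => complex; only the
entries with indices below the relevant size matter.\<close>

definition psd_on :: "nat set \<Rightarrow> (nat \<Rightarrow> nat \<Rightarrow> complex) \<Rightarrow> bool" where
  "psd_on I B \<longleftrightarrow>
     (\<forall>i\<in>I. \<forall>j\<in>I. B j i = cnj (B i j)) \<and>
     (\<forall>x :: nat \<Rightarrow> complex.
        Im (\<Sum>i\<in>I. \<Sum>j\<in>I. cnj (x i) * B i j * x j) = 0 \<and>
        Re (\<Sum>i\<in>I. \<Sum>j\<in>I. cnj (x i) * B i j * x j) \<ge> 0)"

definition P1 :: "nat \<Rightarrow> real \<Rightarrow> (nat \<Rightarrow> nat \<Rightarrow> complex) set" where
  "P1 N \<rho> = {A. \<exists>u :: nat \<Rightarrow> complex.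
      (\<forall>i<N. \<forall>j<N. A i j = u i * cnj (u j)) \<and>
      (\<forall>i<N. \<forall>j<N. norm (A i j) \<le> \<rho>)}"

definition Cm :: "(nat \<Rightarrow> real) \<Rightarrow> nat \<Rightarrow> nat \<Rightarrow> real \<Rightarrow> nat \<Rightarrow> real" where
  "Cm c M N \<rho> m = (\<Sum>j<m.
      real (((M - N + m) choose j))^2 * real (((M - N + m - j - 1) choose (m - j - 1)))^2
      * \<rho> ^ (m + M - N - j) / c (N - m + j))"

definition Lm :: "(nat \<Rightarrow> real) \<Rightarrow> nat \<Rightarrow> nat \<Rightarrow> real \<Rightarrow> nat \<Rightarrow>
    (nat \<Rightarrow> nat \<Rightarrow> complex) \<Rightarrow> (nat \<Rightarrow> nat \<Rightarrow> complex)" where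
  "Lm c M N \<rho> m A = (\<lambda>i j.
      of_real (Cm c M N \<rho> m) * (\<Sum>k<m. of_real (c (N - m + k)) * A i j ^ k)
      - A i j ^ (m + M - N))"

end

theory Submission imports Defs "HOL-Computational_Algebra.Polynomial" "HOL-Analysis.Convex"
begin

fun remp :: "nat \<Rightarrow> complex list \<Rightarrow> complex poly" where
  "remp n [] = 0"
| "remp n (x#ys) = monom (x^(n - length ys)) (length ys) +
     (\<Sum>j\<in>{length ys..<n}. smult (x^(n-1-j)) ([:-x,1:] * remp j ys))"

lemma coeff_lin_mult: "coeff ([:-x,1:] * p) k = (if k = 0 then 0 else coeff p (k-1)) - (x::complex) * coeff p k"
  by (cases k) (simp_all add: coeff_pCons')
lemma coeff_remp: "coeff (remp n (x#ys)) k =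
   (if k = length ys then x^(n - length ys) else 0) +
   (\<Sum>j\<in>{length ys..<n}. x^(n-1-j) * ((if k = 0 then 0 else coeff (remp j ys) (k-1)) - x * coeff (remp j ys) k))"
  by (simp add: coeff_sum coeff_lin_mult del: mult_pCons_left)

lemma coeff_remp_zero: "k \<ge> length xs \<Longrightarrow> coeff (remp n xs) k = 0"
proof (induction xs arbitrary: n k)
  case Nil thus ?case by simp
next
  case (Cons x ys)
  show ?case unfolding coeff_remp using Cons by simp
qed

lemma telesc: "a \<le> n \<Longrightarrow> (x::complex)^(n-a) * z^a + (\<Sum>j\<in>{a..<n}. x^(n-1-j) * ((z - x) * z^j)) = z^n"
proof -
  assume a: "a \<le> n"
  have "(\<Sum>j\<in>{a..<n}. x^(n-1-j) * ((z - x) * z^j)) = (\<Sum>j\<in>{a..<n}. (\<lambda>j. x^(n-j)*z^j) (Suc j) - (\<lambda>j. x^(n-j)*z^j) j)"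
  proof (rule sum.cong)
    fix j assume "j \<in> {a..<n}"
    then have "n - j = Suc (n-1-j)" by auto
    then show "x^(n-1-j) * ((z - x) * z^j) = (\<lambda>j. x^(n-j)*z^j) (Suc j) - (\<lambda>j. x^(n-j)*z^j) j"
      by (simp add: algebra_simps)
  qed simp
  also have "\<dots> = x^(n-n)*z^n - x^(n-a)*z^a" using sum_Suc_diff'[OF a, of "\<lambda>j. x^(n-j)*z^j"] by simp
  finally show ?thesis by simp
qed

lemma poly_remp: "n \<ge> length xs \<Longrightarrow> z \<in> set xs \<Longrightarrow> poly (remp n xs) z = z^n"
proof (induction xs arbitrary: n)
  case Nil thus ?case by simp
next
  case (Cons x ys)
  have P: "poly (remp n (x#ys)) z = x^(n - length ys) * z^(length ys) +
      (\<Sum>j\<in>{length ys..<n}. x^(n-1-j) * ((z - x) * poly (remp j ys) z))"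
    by (simp add: poly_sum poly_monom left_diff_distrib)
  show ?case
  proof (cases "z = x")
    case True
    then show ?thesis using P Cons.prems by (simp add: power_add[symmetric])
  next
    case False
    then have z: "z \<in> set ys" using Cons.prems by simp
    have "(\<Sum>j\<in>{length ys..<n}. x^(n-1-j) * ((z - x) * poly (remp j ys) z))
        = (\<Sum>j\<in>{length ys..<n}. x^(n-1-j) * ((z - x) * z^j))"
      using Cons.IH[OF _ z] by (intro sum.cong) auto
    then show ?thesis using P telesc[of "length ys" n x z] Cons.prems by simp
  qed
qed

lemma poly_remp_sum: "poly (remp n xs) z = (\<Sum>k<length xs. coeff (remp n xs) k * z^k)"
proof -
  have d: "degree (remp n xs) < length xs \<or> remp n xs = 0"
  proof (cases "length xs")
    case 0 then show ?thesis using coeff_remp_zero[of xs] by (auto intro: poly_eqI)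
  next
    case (Suc l)
    have "degree (remp n xs) \<le> l" using coeff_remp_zero[of xs] Suc by (intro degree_le) auto
    then show ?thesis using Suc by auto
  qed
  show ?thesis
  proof (cases "remp n xs = 0")
    case True then show ?thesis by simp
  next
    case False
    then have dl: "degree (remp n xs) < length xs" using d by auto
    show ?thesis unfolding poly_altdef
      by (rule sum.mono_neutral_left) (use dl coeff_remp_zero[of xs] in \<open>auto intro: le_degree\<close>)
  qed
qed

definition bb :: "nat \<Rightarrow> nat \<Rightarrow> nat \<Rightarrow> nat" where
  "bb n m k = (n choose k) * ((n-k-1) choose (m-k-1))"

lemma bb_base: "k < m \<Longrightarrow> bb (m-1) m k = (if k = m-1 then 1 else 0)"
  by (auto simp: bb_def)

lemma bb_rec:
  assumes "1 \<le> m" "k < m" "m - 1 \<le> n"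
  shows "bb (Suc n) m k = bb n m k + (if k \<ge> 1 then bb n (m-1) (k-1) else 0)
                        + (if k < m-1 then bb n (m-1) k else 0)"
proof (cases "k = m - 1")
  case True
  show ?thesis
  proof (cases k)
    case 0 then have "m = 1" using True assms by simp
    then show ?thesis using 0 by (simp add: bb_def)
  next
    case (Suc k')
    have m: "m = Suc (Suc k')" using True Suc assms by simp
    have "bb (Suc n) m k = Suc n choose Suc k'" unfolding bb_def m Suc by simp
    moreover have "bb n m k = n choose Suc k'" unfolding bb_def m Suc by simp
    moreover have "bb n (m-1) (k-1) = n choose k'" unfolding bb_def m Suc by simp
    ultimately show ?thesis using Suc m by simp
  qed
next
  case False
  then have kl: "k < m - 1" using assms by simp
  obtain t where t: "m - k - 1 = Suc t" using kl by (intro that[of "m - k - 2"]) simp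
  obtain a where a: "n - k = Suc a" using kl assms by (intro that[of "n - k - 1"]) simp
  have e1: "bb (Suc n) m k = (Suc n choose k) * (Suc a choose Suc t)"
    unfolding bb_def using a t by (simp add: Suc_diff_le)
  have e2: "bb n m k = (n choose k) * (a choose Suc t)" unfolding bb_def using a t by simp
  have e3: "bb n (m-1) k = (n choose k) * (a choose t)" unfolding bb_def using a t by simp
  have e4: "k \<ge> 1 \<Longrightarrow> bb n (m-1) (k-1) = (n choose (k-1)) * (Suc a choose Suc t)"
    unfolding bb_def using a t kl by (simp add: Suc_diff_le)
  have p1: "Suc n choose k = (n choose k) + (if k \<ge> 1 then n choose (k-1) else 0)"
    by (cases k) auto
  have pa: "Suc a choose Suc t = (a choose t) + (a choose Suc t)" by simp
  show ?thesis
  proof (cases "k = 0")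
    case True then show ?thesis using kl e1 e2 e3 p1 pa by (simp add: algebra_simps)
  next
    case False then show ?thesis using kl e1 e2 e3 e4 p1 pa by (simp add: algebra_simps)
  qed
qed

lemma remp_bound:
  "R \<ge> 0 \<Longrightarrow> \<forall>y\<in>set xs. norm y \<le> R \<Longrightarrow> length xs \<le> n \<Longrightarrow> k < length xs \<Longrightarrow>
   norm (coeff (remp n xs) k) \<le> real (bb n (length xs) k) * R^(n-k)"
proof (induction xs arbitrary: n k)
  case Nil thus ?case by simp
next
  case (Cons x ys)
  define m1 where "m1 = length ys"
  have R: "R \<ge> 0" and nx: "norm x \<le> R" and ny: "\<forall>y\<in>set ys. norm y \<le> R"
    and n: "Suc m1 \<le> n" and k: "k \<le> m1" using Cons.prems by (auto simp: m1_def)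
  define g where "g j = real (if k\<ge>1 then bb j m1 (k-1) else 0) + real (if k<m1 then bb j m1 k else 0)" for j
  have step: "norm (x^(n-1-j) * ((if k = 0 then 0 else coeff (remp j ys) (k-1)) - x * coeff (remp j ys) k))
          \<le> R^(n-k) * g j" if j: "j \<in> {m1..<n}" for j
  proof -
    have b1: "norm (if k = 0 then 0 else coeff (remp j ys) (k-1)) \<le> (if k\<ge>1 then real (bb j m1 (k-1)) * R^(j-(k-1)) else 0)"
    proof (cases "k = 0")
      case False
      then have h: "k-1 < length ys" "length ys \<le> j" using j k by (auto simp: m1_def)
      show ?thesis using Cons.IH[OF R ny h(2) h(1)] False by (simp add: m1_def)
    qed simp
    have b2: "norm (coeff (remp j ys) k) \<le> (if k<m1 then real (bb j m1 k) * R^(j-k) else 0)"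
    proof (cases "k < m1")
      case True
      then have h: "k < length ys" "length ys \<le> j" using j k by (auto simp: m1_def)
      show ?thesis using Cons.IH[OF R ny h(2) h(1)] True by (simp add: m1_def)
    next
      case False then show ?thesis using coeff_remp_zero[of ys k j] by (simp add: m1_def)
    qed
    define A where "A = (if k = 0 then 0 else coeff (remp j ys) (k-1))"
    define B where "B = coeff (remp j ys) k"
    have tri: "norm (A - x*B) \<le> norm A + R * norm B"
      using norm_triangle_ineq4[of A "x*B"] mult_right_mono[OF nx, of "norm B"] by (simp add: norm_mult)
    have "norm (x^(n-1-j) * (A - x * B)) \<le> R^(n-1-j) * (norm A + R * norm B)"
      unfolding norm_mult norm_power
      by (intro mult_mono power_mono tri) (use R nx in auto)
    then have "norm (x^(n-1-j) * ((if k = 0 then 0 else coeff (remp j ys) (k-1)) - x * coeff (remp j ys) k))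
        \<le> R^(n-1-j) * (norm (if k = 0 then 0 else coeff (remp j ys) (k-1)) + R * norm (coeff (remp j ys) k))"
      unfolding A_def B_def .
    also have "\<dots> \<le> R^(n-1-j) * ((if k\<ge>1 then real (bb j m1 (k-1)) * R^(j-(k-1)) else 0) + R * (if k<m1 then real (bb j m1 k) * R^(j-k) else 0))"
      by (intro mult_left_mono add_mono b1 mult_left_mono b2) (use R in auto)
    also have "\<dots> = R^(n-k) * g j"
    proof -
      have x1: "R^(n-1-j) * R^(j-(k-1)) = R^(n-k)" if "k \<ge> 1"
      proof -
        have e: "(n-1-j)+(j-(k-1)) = n-k" using j k that by auto
        show ?thesis by (simp only: power_add[symmetric] e)
      qed
      have x2: "R^(n-1-j) * (R * R^(j-k)) = R^(n-k)" if "k < m1"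
      proof -
        have e: "(n-1-j)+Suc (j-k) = n-k" using j k that by auto
        show ?thesis by (simp only: power_Suc[symmetric] power_add[symmetric] e)
      qed
      have x1': "R^(n - Suc j) * R^(Suc j - k) = R^(n-k)" if "k \<ge> 1"
        using x1[OF that] that by (simp add: Suc_diff_le)
      have x2': "R * (R^(n - Suc j) * R^(j-k)) = R^(n-k)" if "k < m1"
        using x2[OF that] by (metis diff_Suc_eq_diff_pred mult.left_commute)
      show ?thesis unfolding g_def
      proof (cases "k \<ge> 1"; cases "k < m1")
      qed (simp_all add: x1' x2' distrib_left mult.left_commute[of "R^(n - Suc j)"] mult.commute[of _ "R^(n-k)"])
    qed
    finally show ?thesis .
  qed
  have gtel: "g j = real (bb (Suc j) (Suc m1) k) - real (bb j (Suc m1) k)" if "j \<in> {m1..<n}" for j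
  proof -
    have "bb (Suc j) (Suc m1) k = bb j (Suc m1) k + (if k \<ge> 1 then bb j m1 (k-1) else 0)
                        + (if k < m1 then bb j m1 k else 0)"
      using bb_rec[of "Suc m1" k j] that k by simp
    then have "real (bb (Suc j) (Suc m1) k) = real (bb j (Suc m1) k) + real (if k \<ge> 1 then bb j m1 (k-1) else 0)
                        + real (if k < m1 then bb j m1 k else 0)"
      by (simp only: of_nat_add[symmetric])
    then show ?thesis unfolding g_def by linarith
  qed
  have "norm (coeff (remp n (x#ys)) k) \<le> norm (if k = m1 then x^(n - m1) else 0) +
     norm (\<Sum>j\<in>{m1..<n}. x^(n-1-j) * ((if k = 0 then 0 else coeff (remp j ys) (k-1)) - x * coeff (remp j ys) k))"
    unfolding coeff_remp m1_def[symmetric] by (rule norm_triangle_ineq)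
  also have "\<dots> \<le> real (bb m1 (Suc m1) k) * R^(n-k) + (\<Sum>j\<in>{m1..<n}. R^(n-k) * g j)"
  proof (intro add_mono order.trans[OF norm_sum] sum_mono step)
    show "norm (if k = m1 then x ^ (n - m1) else 0) \<le> real (bb m1 (Suc m1) k) * R ^ (n - k)"
      using bb_base[of k "Suc m1"] k by (auto simp: norm_power intro: power_mono nx)
  qed
  also have "(\<Sum>j\<in>{m1..<n}. R^(n-k) * g j) = R^(n-k) * (real (bb n (Suc m1) k) - real (bb m1 (Suc m1) k))"
  proof -
    have "(\<Sum>j\<in>{m1..<n}. g j) = (\<Sum>j\<in>{m1..<n}. real (bb (Suc j) (Suc m1) k) - real (bb j (Suc m1) k))"
      using gtel by (intro sum.cong) auto
    also have "\<dots> = real (bb n (Suc m1) k) - real (bb m1 (Suc m1) k)"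
      using sum_Suc_diff'[of m1 n "\<lambda>j. real (bb j (Suc m1) k)"] n by simp
    finally show ?thesis by (simp add: sum_distrib_left[symmetric])
  qed
  finally show ?case by (simp add: m1_def algebra_simps)
qed


lemma quad_form:
  fixes A :: "nat \<Rightarrow> nat \<Rightarrow> complex" and u x :: "nat \<Rightarrow> complex"
  assumes "\<forall>i\<in>I. \<forall>j\<in>I. A i j = u i * cnj (u j)"
  shows "(\<Sum>i\<in>I. \<Sum>j\<in>I. cnj (x i) * (of_real C1 * (\<Sum>k<m. of_real (d k) * A i j ^ k) - of_real C2 * A i j ^ n) * x j)
   = of_real (C1 * (\<Sum>k<m. d k * (norm (\<Sum>j\<in>I. cnj (u j)^k * x j))^2) - C2 * (norm (\<Sum>j\<in>I. cnj (u j)^n * x j))^2)"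
proof -
  define W where "W k = (\<Sum>j\<in>I. cnj (u j)^k * x j)" for k
  define T where "T k = (\<Sum>i\<in>I. \<Sum>j\<in>I. cnj (x i) * A i j ^ k * x j)" for k
  have Q: "T k = of_real ((norm (W k))^2)" for k
  proof -
    have "T k = (\<Sum>i\<in>I. \<Sum>j\<in>I. (cnj (x i) * u i ^ k) * (cnj (u j)^k * x j))"
      unfolding T_def using assms by (intro sum.cong refl) (simp add: power_mult_distrib mult_ac)
    also have "\<dots> = (\<Sum>i\<in>I. cnj (x i) * u i ^ k) * W k" by (simp add: W_def sum_product)
    also have "(\<Sum>i\<in>I. cnj (x i) * u i ^ k) = cnj (W k)" by (simp add: W_def mult.commute)
    finally have "T k = W k * cnj (W k)" by (simp add: mult.commute)
    then show ?thesis by (metis complex_norm_square)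
  qed
  have "(\<Sum>i\<in>I. \<Sum>j\<in>I. cnj (x i) * (of_real C1 * (\<Sum>k<m. of_real (d k) * A i j ^ k) - of_real C2 * A i j ^ n) * x j)
      = (\<Sum>i\<in>I. \<Sum>j\<in>I. (\<Sum>k<m. of_real C1 * of_real (d k) * (cnj (x i) * A i j ^ k * x j)) - of_real C2 * (cnj (x i) * A i j ^ n * x j))"
    by (intro sum.cong refl) (simp add: right_diff_distrib left_diff_distrib sum_distrib_left sum_distrib_right mult_ac)
  also have "\<dots> = (\<Sum>i\<in>I. \<Sum>j\<in>I. (\<Sum>k<m. of_real C1 * of_real (d k) * (cnj (x i) * A i j ^ k * x j))) - of_real C2 * T n"
    unfolding T_def by (simp add: sum_subtractf sum_distrib_left)
  also have "(\<Sum>i\<in>I. \<Sum>j\<in>I. (\<Sum>k<m. of_real C1 * of_real (d k) * (cnj (x i) * A i j ^ k * x j)))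
       = (\<Sum>k<m. of_real C1 * of_real (d k) * T k)"
  proof -
    have sw: "(\<Sum>i\<in>I. \<Sum>j\<in>I. \<Sum>k<m. F i j k) = (\<Sum>k<m. \<Sum>i\<in>I. \<Sum>j\<in>I. F i j k)" for F :: "nat \<Rightarrow> nat \<Rightarrow> nat \<Rightarrow> complex"
    proof -
      have "(\<Sum>i\<in>I. \<Sum>j\<in>I. \<Sum>k<m. F i j k) = (\<Sum>i\<in>I. \<Sum>k<m. \<Sum>j\<in>I. F i j k)"
        by (rule sum.cong[OF refl], rule sum.swap)
      also have "\<dots> = (\<Sum>k<m. \<Sum>i\<in>I. \<Sum>j\<in>I. F i j k)" by (rule sum.swap)
      finally show ?thesis .
    qed
    show ?thesis unfolding sw unfolding T_def by (simp add: sum_distrib_left)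
  qed
  finally show ?thesis
    by (simp add: Q W_def sum_distrib_left mult_ac)
qed


lemma key:
  fixes u x :: "nat \<Rightarrow> complex" and cc :: "nat \<Rightarrow> real"
  assumes fin: "finite I" and card: "card I = m" and nm: "m \<le> n" and rho: "\<rho> \<ge> 0"
    and ub: "\<forall>i\<in>I. norm (u i) \<le> sqrt \<rho>" and cpos: "\<forall>k<m. cc k > 0"
  shows "(norm (\<Sum>j\<in>I. cnj (u j)^n * x j))^2 \<le> (\<Sum>k<m. real (bb n m k)^2 * \<rho>^(n-k) / cc k)
           * (\<Sum>k<m. cc k * (norm (\<Sum>j\<in>I. cnj (u j)^k * x j))^2)"
proof -
  define xs where "xs = map u (sorted_list_of_set I)"
  have lxs: "length xs = m" using card by (simp add: xs_def)
  have sxs: "set xs = u ` I" using fin by (simp add: xs_def)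
  define a where "a k = coeff (remp n xs) k" for k
  have ev: "u j ^ n = (\<Sum>k<m. a k * u j ^ k)" if "j \<in> I" for j
    using poly_remp[of xs n "u j"] poly_remp_sum[of n xs "u j"] lxs nm sxs that by (simp add: a_def)
  have ab: "norm (a k) \<le> real (bb n m k) * sqrt \<rho> ^ (n-k)" if "k < m" for k
    using remp_bound[of "sqrt \<rho>" xs n k] rho ub sxs lxs nm that by (auto simp: a_def)
  define W where "W k = (\<Sum>j\<in>I. cnj (u j)^k * x j)" for k
  have Wn: "W n = (\<Sum>k<m. cnj (a k) * W k)"
  proof -
    have "W n = (\<Sum>j\<in>I. \<Sum>k<m. cnj (a k) * (cnj (u j)^k * x j))"
      unfolding W_def
    proof (intro sum.cong refl)
      fix j assume j: "j \<in> I"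
      have "cnj (u j)^n = cnj (u j ^ n)" by simp
      also have "\<dots> = (\<Sum>k<m. cnj (a k) * cnj (u j) ^ k)" using ev[OF j] by simp
      finally show "cnj (u j)^n * x j = (\<Sum>k<m. cnj (a k) * (cnj (u j)^k * x j))"
        by (simp add: sum_distrib_left mult_ac)
    qed
    also have "\<dots> = (\<Sum>k<m. \<Sum>j\<in>I. cnj (a k) * (cnj (u j)^k * x j))" by (rule sum.swap)
    also have "\<dots> = (\<Sum>k<m. cnj (a k) * W k)" unfolding W_def by (simp add: sum_distrib_left)
    finally show ?thesis .
  qed
  have "norm (W n) \<le> (\<Sum>k<m. norm (a k) * norm (W k))"
    unfolding Wn by (rule order.trans[OF norm_sum]) (simp add: norm_mult)
  also have "\<dots> = (\<Sum>k<m. (norm (a k) / sqrt (cc k)) * (sqrt (cc k) * norm (W k)))"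
  proof (rule sum.cong[OF refl])
    fix k assume "k \<in> {..<m}"
    then have s: "sqrt (cc k) > 0" using cpos by simp
    have gen: "(s::real) > 0 \<Longrightarrow> a' * w = (a' / s) * (s * w)" for s a' w by (simp add: field_simps)
    show "norm (a k) * norm (W k) = (norm (a k) / sqrt (cc k)) * (sqrt (cc k) * norm (W k))"
      by (rule gen[OF s])
  qed
  finally have h1: "norm (W n) \<le> (\<Sum>k<m. (norm (a k) / sqrt (cc k)) * (sqrt (cc k) * norm (W k)))" .
  have "(norm (W n))^2 \<le> (\<Sum>k<m. (norm (a k) / sqrt (cc k)) * (sqrt (cc k) * norm (W k)))^2"
    by (rule power_mono[OF h1]) simp
  also have "\<dots> \<le> (\<Sum>k<m. (norm (a k) / sqrt (cc k))^2) * (\<Sum>k<m. (sqrt (cc k) * norm (W k))^2)"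
    by (rule Cauchy_Schwarz_ineq_sum)
  also have "\<dots> \<le> (\<Sum>k<m. real (bb n m k)^2 * \<rho>^(n-k) / cc k) * (\<Sum>k<m. cc k * (norm (W k))^2)"
  proof (rule mult_mono)
    show "(\<Sum>k<m. (norm (a k) / sqrt (cc k))^2) \<le> (\<Sum>k<m. real (bb n m k)^2 * \<rho>^(n-k) / cc k)"
    proof (rule sum_mono)
      fix k assume "k \<in> {..<m}"
      then have k: "k < m" by simp
      have c: "cc k > 0" using cpos k by simp
      have "(norm (a k))^2 \<le> (real (bb n m k) * sqrt \<rho> ^ (n-k))^2"
        by (rule power_mono[OF ab[OF k]]) simp
      also have "\<dots> = real (bb n m k)^2 * \<rho>^(n-k)"
      proof -
        have "(sqrt \<rho> ^ (n-k))^2 = (sqrt \<rho> ^ 2)^(n-k)"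
          by (simp only: power_mult[symmetric] mult.commute)
        then show ?thesis using rho by (simp add: power_mult_distrib)
      qed
      finally have "(norm (a k))^2 \<le> real (bb n m k)^2 * \<rho>^(n-k)" .
      then show "(norm (a k) / sqrt (cc k))^2 \<le> real (bb n m k)^2 * \<rho>^(n-k) / cc k"
        using c by (simp add: power_divide divide_right_mono)
    qed
    show "(\<Sum>k<m. (sqrt (cc k) * norm (W k))^2) \<le> (\<Sum>k<m. cc k * (norm (W k))^2)"
      using cpos by (intro sum_mono) (simp add: power_mult_distrib less_imp_le)
  qed (use cpos rho in \<open>auto intro!: sum_nonneg divide_nonneg_pos\<close>)
  finally show ?thesis unfolding W_def .
qed


lemma psd_general:
  fixes A :: "nat \<Rightarrow> nat \<Rightarrow> complex" and u :: "nat \<Rightarrow> complex" and d :: "nat \<Rightarrow> real"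
  assumes AI: "\<forall>i\<in>I. \<forall>j\<in>I. A i j = u i * cnj (u j)"
    and ineq: "\<And>x. C2 * (norm (\<Sum>j\<in>I. cnj (u j)^n * x j))^2 \<le> C1 * (\<Sum>k<m. d k * (norm (\<Sum>j\<in>I. cnj (u j)^k * x j))^2)"
  shows "psd_on I (\<lambda>i j. of_real C1 * (\<Sum>k<m. of_real (d k) * A i j ^ k) - of_real C2 * A i j ^ n)"
  unfolding psd_on_def
proof (intro conjI ballI allI)
  fix i j assume "i \<in> I" "j \<in> I"
  then have "A j i = cnj (A i j)" using AI by simp
  then show "of_real C1 * (\<Sum>k<m. of_real (d k) * A j i ^ k) - of_real C2 * A j i ^ n =
    cnj (of_real C1 * (\<Sum>k<m. of_real (d k) * A i j ^ k) - of_real C2 * A i j ^ n)" by simp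
next
  fix x :: "nat \<Rightarrow> complex"
  note q = quad_form[OF AI]
  show "Im (\<Sum>i\<in>I. \<Sum>j\<in>I. cnj (x i) * (of_real C1 * (\<Sum>k<m. of_real (d k) * A i j ^ k) - of_real C2 * A i j ^ n) * x j) = 0"
    unfolding q by (rule Im_complex_of_real)
  show "Re (\<Sum>i\<in>I. \<Sum>j\<in>I. cnj (x i) * (of_real C1 * (\<Sum>k<m. of_real (d k) * A i j ^ k) - of_real C2 * A i j ^ n) * x j) \<ge> 0"
    unfolding q Re_complex_of_real using ineq[of x] by simp
qed

lemma Cm_eq:
  assumes "M \<ge> N"
  shows "Cm c M N \<rho> m = (\<Sum>k<m. real (bb (m+M-N) m k)^2 * \<rho>^((m+M-N)-k) / c (N-m+k))"
proof -
  have e: "M - N + m = m + M - N" using assms by simp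
  show ?thesis unfolding Cm_def bb_def e by (simp add: power_mult_distrib)
qed

theorem mainTheorem8:
  fixes \<rho> :: real and M N :: nat and c :: "nat \<Rightarrow> real"
  assumes "\<rho> > 0" and "N \<ge> 1" and "M \<ge> N"
    and "\<forall>k<N. c k > 0"
  shows "(\<forall>m. 1 \<le> m \<and> m \<le> N \<longrightarrow>
           (\<forall>A\<in>P1 N \<rho>. \<forall>I. I \<subseteq> {..<N} \<and> card I = m \<longrightarrow>
              psd_on I (Lm c M N \<rho> m A)))
       \<and> (\<forall>A\<in>P1 N \<rho>. psd_on {..<N}
              (\<lambda>i j. (\<Sum>k<N. of_real (c k) * A i j ^ k)
                     - of_real (1 / Cm c M N \<rho> N) * A i j ^ M))"
proof -
  have P1u: "\<exists>u. (\<forall>i<N. \<forall>j<N. A i j = u i * cnj (u j)) \<and> (\<forall>i<N. norm (u i) \<le> sqrt \<rho>)"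
    if Amem: "A \<in> P1 N \<rho>" for A
  proof -
    obtain u where u: "\<forall>i<N. \<forall>j<N. A i j = u i * cnj (u j)" "\<forall>i<N. \<forall>j<N. norm (A i j) \<le> \<rho>"
      using Amem unfolding P1_def by blast
    have "norm (u i) \<le> sqrt \<rho>" if i: "i < N" for i
    proof (rule real_le_rsqrt)
      have "norm (A i i) = (norm (u i))^2" using u(1) i by (simp add: norm_mult power2_eq_square)
      then show "(norm (u i))^2 \<le> \<rho>" using u(2) i by metis
    qed
    then show ?thesis using u(1) by blast
  qed
  have part: "\<forall>x. (norm (\<Sum>j\<in>I. cnj (u j)^n * x j))^2 \<le> Cm c M N \<rho> m
           * (\<Sum>k<m. c (N-m+k) * (norm (\<Sum>j\<in>I. cnj (u j)^k * x j))^2)"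
    if "I \<subseteq> {..<N}" "card I = m" "m \<le> N" "n = m + M - N" "\<forall>i<N. norm (u i) \<le> sqrt \<rho>" for I m n u
  proof
    fix x :: "nat \<Rightarrow> complex"
    have fin: "finite I" using that(1) finite_subset by blast
    show "(norm (\<Sum>j\<in>I. cnj (u j)^n * x j))^2 \<le> Cm c M N \<rho> m
           * (\<Sum>k<m. c (N-m+k) * (norm (\<Sum>j\<in>I. cnj (u j)^k * x j))^2)"
      unfolding Cm_eq[OF assms(3)] that(4)
      by (rule key[OF fin that(2)]) (use that assms in auto)
  qed
  show ?thesis
  proof (intro conjI allI impI ballI)
    fix m A I assume m: "1 \<le> m \<and> m \<le> N" and A: "A \<in> P1 N \<rho>" and I: "I \<subseteq> {..<N} \<and> card I = m"
    obtain u where u: "\<forall>i<N. \<forall>j<N. A i j = u i * cnj (u j)" "\<forall>i<N. norm (u i) \<le> sqrt \<rho>"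
      using P1u[OF A] by blast
    have "Lm c M N \<rho> m A = (\<lambda>i j. of_real (Cm c M N \<rho> m) * (\<Sum>k<m. of_real (c (N-m+k)) * A i j ^ k)
         - of_real 1 * A i j ^ (m+M-N))"
      unfolding Lm_def by simp
    moreover have "psd_on I (\<lambda>i j. of_real (Cm c M N \<rho> m) * (\<Sum>k<m. of_real (c (N-m+k)) * A i j ^ k)
         - of_real 1 * A i j ^ (m+M-N))"
    proof (rule psd_general[where u = u])
      show "\<forall>i\<in>I. \<forall>j\<in>I. A i j = u i * cnj (u j)" using u I by auto
      fix x :: "nat \<Rightarrow> complex"
      show "1 * (norm (\<Sum>j\<in>I. cnj (u j)^(m+M-N) * x j))^2 \<le> Cm c M N \<rho> m
           * (\<Sum>k<m. c (N-m+k) * (norm (\<Sum>j\<in>I. cnj (u j)^k * x j))^2)"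
        using part[of I m "m+M-N" u] I m u by simp
    qed
    ultimately show "psd_on I (Lm c M N \<rho> m A)" by simp
  next
    fix A assume A: "A \<in> P1 N \<rho>"
    obtain u where u: "\<forall>i<N. \<forall>j<N. A i j = u i * cnj (u j)" "\<forall>i<N. norm (u i) \<le> sqrt \<rho>"
      using P1u[OF A] by blast
    define C where "C = Cm c M N \<rho> N"
    have Cpos: "C > 0"
    proof -
      have "C = (\<Sum>k<N. real (bb M N k)^2 * \<rho>^(M-k) / c k)"
        unfolding C_def Cm_eq[OF assms(3)] using assms by simp
      also have "\<dots> > 0"
      proof (rule sum_pos2[of _ 0])
        have "bb M N 0 > 0" unfolding bb_def using assms by simp
        then show "0 < real (bb M N 0)^2 * \<rho>^(M-0) / c 0" using assms by simp
        show "\<And>i. i\<in>{..<N} \<Longrightarrow> 0 \<le> real (bb M N i)^2 * \<rho>^(M-i) / c i"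
          using assms by (auto intro!: divide_nonneg_pos)
      qed (use assms in auto)
      finally show ?thesis .
    qed
    have "psd_on {..<N} (\<lambda>i j. of_real 1 * (\<Sum>k<N. of_real (c k) * A i j ^ k) - of_real (1/C) * A i j ^ M)"
    proof (rule psd_general[where u = u])
      show "\<forall>i\<in>{..<N}. \<forall>j\<in>{..<N}. A i j = u i * cnj (u j)" using u by auto
      fix x :: "nat \<Rightarrow> complex"
      have "(norm (\<Sum>j\<in>{..<N}. cnj (u j)^M * x j))^2 \<le> C
           * (\<Sum>k<N. c k * (norm (\<Sum>j\<in>{..<N}. cnj (u j)^k * x j))^2)"
        using part[of "{..<N}" N M u] u assms unfolding C_def by simp
      then show "1/C * (norm (\<Sum>j\<in>{..<N}. cnj (u j)^M * x j))^2 \<le> 1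
           * (\<Sum>k<N. c k * (norm (\<Sum>j\<in>{..<N}. cnj (u j)^k * x j))^2)"
        using Cpos by (simp add: field_simps)
    qed
    then show "psd_on {..<N} (\<lambda>i j. (\<Sum>k<N. of_real (c k) * A i j ^ k)
                     - of_real (1 / Cm c M N \<rho> N) * A i j ^ M)"
      unfolding C_def by simp
  qed
qed

end
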